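(* Let $n\ge0$ and let $a\preccurlyeq b$ be vertices of $\square^n$ (i.e. subsets $a\subseteq b\subseteq\{1,\dots,n\}$). There is an isomorphism of preordered sets $\mathfrak{C}^{\square}_{path}(\square^n)(a,b)\to\Sigma_{b\setminus a}$, where $\Sigma_{b\setminus a}$ carries the weak Bruhat order $\leadsto_B$, and these isomorphisms are compatible with concatenation (for $a\preccurlyeq b\preccurlyeq c$, concatenation of paths corresponds to concatenation of sequences $\Sigma_{b\setminus a}\times\Sigma_{c\setminus b}\to\Sigma_{c\setminus a}$). Consequently the preorder $\leadsto$ on $\mathfrak{C}^{\square}_{path}(\square^n)(a,b)$ is a partial order, isomorphic to the weak Bruhat order.
   Context: Cubical sets: presheaves on the category $\square$ with objects $[1]^n$ and morphisms generated by faces $\partial_{i,\epsilon}$ (insert $\epsilon$ at coordinate $i$), degeneracies (delete a coordinate) and negative connections ($(x_i,x_{i+1})\mapsto\max(x_i,x_{i+1})$); $\square^n$ is representable, and its vertices are identified with subsets of $\{1,\dots,n\}$ ordered by inclusion $\preccurlyeq$. Paths: $I_m$ is $m$ copies of $\square^1$ glued end to start, with distinguished initial/terminal vertices. For $0\le k\le m-2$, $\mathbb{I}_{k,m}$ is $I_k$, $\square^2$, $I_{m-2-k}$ glued end to start (through the vertices $\emptyset$ and $\{1,2\}$ of $\square^2$); $s_{k,m},t_{k,m}:I_m\to\mathbb{I}_{k,m}$ are the identity on the first $k$ and last $m-2-k$ edges and send edges $k+1,k+2$ to $\emptyset\to\{2\}\to\{1,2\}$ (for $s$), resp. $\emptyset\to\{1\}\to\{1,2\}$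 (for $t$). For a cubical set $S$ with vertices $a,b$, $\mathfrak{C}^{\square}_{path}(S)(a,b)$ is the set of maps $\gamma:I_m\to S$ (any $m$) sending the initial vertex to $a$ and the terminal to $b$, modulo the equivalence relation generated by $\gamma\sim\gamma'$ when $\gamma=\gamma'\circ h$ for an endpoint-preserving $h:I_m\to I_{m'}$, preordered by the reflexive-transitive closure $\leadsto$ of $[F\circ s_{k,m}]\leadsto[F\circ t_{k,m}]$ for endpoint-preserving $F:\mathbb{I}_{k,m}\to S$. Composition is concatenation of paths. For a finite totally ordered set $A$ (here with order induced from $\{1,\dots,n\}$), $\Sigma_A$ is the set of sequences $(x_1,\dots,x_k)$ enumerating $A$ without repetition; the weak Bruhat order $\leadsto_B$ is the partial order generated by $(x_1,\dots,x_i,x_{i+1},\dots,x_k)\leadsto_B(x_1,\dots,x_{i+1},x_i,\dots,x_k)$ whenever $x_i>x_{i+1}$. *)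

theory Defs
  imports Main
begin

text \<open>A vertex of [1]^p is represented by the set of coordinates (among 1..p) equal to 1.
  A morphism [1]^p -> [1]^q is represented by its action on vertices, canonicalised to
  return the empty set outside the domain, so that equality of morphisms is equality of
  functions.\<close>

definition rst :: "nat \<Rightarrow> (nat set \<Rightarrow> nat set) \<Rightarrow> nat set \<Rightarrow> nat set" where
  "rst p f = (\<lambda>x. if x \<subseteq> {1..p} then f x else {})"

definition cmp :: "nat \<Rightarrow> (nat set \<Rightarrow> nat set) \<Rightarrow> (nat set \<Rightarrow> nat set) \<Rightarrow> nat set \<Rightarrow> nat set" where
  "cmp p g f = rst p (\<lambda>x. g (f x))"

text \<open>face: [1]^p -> [1]^(p+1), insert e at coordinate i\<close>
definition face :: "nat \<Rightarrow> nat \<Rightarrow> bool \<Rightarrow> nat set \<Rightarrow> nat set" where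
  "face p i e = rst p (\<lambda>x. {j \<in> x. j < i} \<union> (\<lambda>j. j + 1) ` {j \<in> x. j \<ge> i} \<union> (if e then {i} else {}))"

text \<open>degeneracy: [1]^(p+1) -> [1]^p, delete coordinate i\<close>
definition degen :: "nat \<Rightarrow> nat \<Rightarrow> nat set \<Rightarrow> nat set" where
  "degen p i = rst (Suc p) (\<lambda>x. {j \<in> x. j < i} \<union> (\<lambda>j. j - 1) ` {j \<in> x. j > i})"

text \<open>negative connection: [1]^(p+1) -> [1]^p, (x_i, x_(i+1)) |-> max x_i x_(i+1)\<close>
definition conn :: "nat \<Rightarrow> nat \<Rightarrow> nat set \<Rightarrow> nat set" where
  "conn p i = rst (Suc p) (\<lambda>x. {j \<in> x. j < i} \<union> (if i \<in> x \<or> Suc i \<in> x then {i} else {})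
                              \<union> (\<lambda>j. j - 1) ` {j \<in> x. j > Suc i})"

inductive cmor :: "nat \<Rightarrow> nat \<Rightarrow> (nat set \<Rightarrow> nat set) \<Rightarrow> bool" where
  cmor_id: "cmor p p (rst p id)"
| cmor_face: "1 \<le> i \<Longrightarrow> i \<le> Suc p \<Longrightarrow> cmor p (Suc p) (face p i e)"
| cmor_degen: "1 \<le> i \<Longrightarrow> i \<le> Suc p \<Longrightarrow> cmor (Suc p) p (degen p i)"
| cmor_conn: "1 \<le> i \<Longrightarrow> i \<le> p \<Longrightarrow> cmor (Suc p) p (conn p i)"
| cmor_comp: "cmor p q f \<Longrightarrow> cmor q r g \<Longrightarrow> cmor p r (cmp p g f)"

text \<open>p-cells of \<box>^n are morphisms [1]^p -> [1]^n; vertices are identified with subsets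
  of {1..n}; a 1-cell e goes from e {} to e {1}.\<close>

definition src :: "(nat set \<Rightarrow> nat set) \<Rightarrow> nat set" where "src e = e {}"
definition tgt :: "(nat set \<Rightarrow> nat set) \<Rightarrow> nat set" where "tgt e = e {1}"

definition dgn_cell :: "nat set \<Rightarrow> nat set \<Rightarrow> nat set" where
  "dgn_cell v = cmp 1 (rst 0 (\<lambda>_. v)) (degen 0 1)"

definition chain :: "('c \<Rightarrow> 'v) \<Rightarrow> ('c \<Rightarrow> 'v) \<Rightarrow> 'v \<Rightarrow> 'v \<Rightarrow> 'c list \<Rightarrow> bool" where
  "chain s t x y cs \<longleftrightarrow> (cs = [] \<longrightarrow> x = y) \<and>
     (cs \<noteq> [] \<longrightarrow> s (hd cs) = x \<and> t (last cs) = y \<and>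
        (\<forall>i. Suc i < length cs \<longrightarrow> t (cs ! i) = s (cs ! Suc i)))"

text \<open>A map I_m -> \<box>^n from a to b = m composable 1-cells (universal property of gluing).\<close>
definition is_path :: "nat \<Rightarrow> nat set \<Rightarrow> nat set \<Rightarrow> (nat set \<Rightarrow> nat set) list \<Rightarrow> bool" where
  "is_path n a b es \<longleftrightarrow> a \<subseteq> {1..n} \<and> (\<forall>e\<in>set es. cmor 1 n e) \<and> chain src tgt a b es"

text \<open>1-cells of I_m: degenerate cells at vertices 0..m, and the edges 1..m (edge j from j-1 to j).\<close>
datatype icell = IDeg nat | IEdge nat

fun isrc :: "icell \<Rightarrow> nat" where "isrc (IDeg j) = j" | "isrc (IEdge j) = j - 1"
fun itgt :: "icell \<Rightarrow> nat" where "itgt (IDeg j) = j" | "itgt (IEdge j) = j"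
fun ivalid :: "nat \<Rightarrow> icell \<Rightarrow> bool" where
  "ivalid m (IDeg j) \<longleftrightarrow> j \<le> m" | "ivalid m (IEdge j) \<longleftrightarrow> 1 \<le> j \<and> j \<le> m"

text \<open>endpoint-preserving map I_(length h) -> I_m'\<close>
definition imap :: "nat \<Rightarrow> icell list \<Rightarrow> bool" where
  "imap m' h \<longleftrightarrow> (\<forall>c\<in>set h. ivalid m' c) \<and> chain isrc itgt 0 m' h"

definition pvert :: "nat set \<Rightarrow> (nat set \<Rightarrow> nat set) list \<Rightarrow> nat \<Rightarrow> nat set" where
  "pvert a es j = (if j = 0 then a else tgt (es ! (j - 1)))"

text \<open>precomposition gamma o h on a 1-cell of I_m\<close>
fun icomp :: "nat set \<Rightarrow> (nat set \<Rightarrow> nat set) list \<Rightarrow> icell \<Rightarrow> nat set \<Rightarrow> nat set" where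
  "icomp a es (IDeg j) = dgn_cell (pvert a es j)"
| "icomp a es (IEdge j) = es ! (j - 1)"

definition path_rel0 :: "nat \<Rightarrow> nat set \<Rightarrow> nat set \<Rightarrow> (nat set \<Rightarrow> nat set) list \<Rightarrow> (nat set \<Rightarrow> nat set) list \<Rightarrow> bool" where
  "path_rel0 n a b x y \<longleftrightarrow> is_path n a b x \<and> is_path n a b y \<and>
     (\<exists>h. imap (length y) h \<and> x = map (icomp a y) h)"

definition pathEq :: "nat \<Rightarrow> nat set \<Rightarrow> nat set \<Rightarrow> (nat set \<Rightarrow> nat set) list \<Rightarrow> (nat set \<Rightarrow> nat set) list \<Rightarrow> bool" where
  "pathEq n a b = equivclp (path_rel0 n a b)"

definition pcls :: "nat \<Rightarrow> nat set \<Rightarrow> nat set \<Rightarrow> (nat set \<Rightarrow> nat set) list \<Rightarrow> (nat set \<Rightarrow> nat set) list set" where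
  "pcls n a b x = {y. pathEq n a b x y}"

definition Cpath :: "nat \<Rightarrow> nat set \<Rightarrow> nat set \<Rightarrow> (nat set \<Rightarrow> nat set) list set set" where
  "Cpath n a b = {x. is_path n a b x} // {(x, y). pathEq n a b x y}"

text \<open>generating relation [F o s_(k,m)] ~> [F o t_(k,m)], F : II_(k,m) -> \<box>^n given by
  k edges, a 2-cell c, and m-2-k edges (universal property of gluing).\<close>
definition leads1 :: "nat \<Rightarrow> nat set \<Rightarrow> nat set \<Rightarrow> (nat set \<Rightarrow> nat set) list \<Rightarrow> (nat set \<Rightarrow> nat set) list \<Rightarrow> bool" where
  "leads1 n a b x y \<longleftrightarrow> (\<exists>es1 c es2. is_path n a (c {}) es1 \<and> cmor 2 n c \<and> is_path n (c {1,2}) b es2 \<and>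
      pathEq n a b x (es1 @ [cmp 1 c (face 1 1 False), cmp 1 c (face 1 2 True)] @ es2) \<and>
      pathEq n a b y (es1 @ [cmp 1 c (face 1 2 False), cmp 1 c (face 1 1 True)] @ es2))"

definition leads :: "nat \<Rightarrow> nat set \<Rightarrow> nat set \<Rightarrow> (nat set \<Rightarrow> nat set) list set \<Rightarrow> (nat set \<Rightarrow> nat set) list set \<Rightarrow> bool" where
  "leads n a b X Y \<longleftrightarrow> (\<exists>x\<in>X. \<exists>y\<in>Y. (\<lambda>u v. leads1 n a b u v \<or> pathEq n a b u v)\<^sup>*\<^sup>* x y)"

definition Sigma_seq :: "nat set \<Rightarrow> nat list set" where
  "Sigma_seq A = {xs. distinct xs \<and> set xs = A}"

definition bstep :: "nat list \<Rightarrow> nat list \<Rightarrow> bool" where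
  "bstep xs ys \<longleftrightarrow> (\<exists>i. Suc i < length xs \<and> xs ! i > xs ! Suc i \<and>
      ys = xs[i := xs ! Suc i, Suc i := xs ! i])"

definition bruhat :: "nat list \<Rightarrow> nat list \<Rightarrow> bool" where
  "bruhat = bstep\<^sup>*\<^sup>*"

end

theory Submission
  imports Defs
begin


definition INV :: "nat \<Rightarrow> nat \<Rightarrow> (nat set \<Rightarrow> nat set) \<Rightarrow> bool" where
"INV p q f \<longleftrightarrow> (\<forall>x. x \<subseteq> {1..p} \<longrightarrow> f x \<subseteq> {1..q}) \<and>
  (\<forall>x y. x \<subseteq> {1..p} \<longrightarrow> y \<subseteq> {1..p} \<longrightarrow> f (x \<union> y) = f x \<union> f y) \<and>
  (\<forall>l\<in>{1..p}. \<forall>u v. u \<in> f {l} - f {} \<longrightarrow> v \<in> f {l} - f {} \<longrightarrow> u = v) \<and>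
  (\<forall>l l'. l \<in> {1..p} \<longrightarrow> l' \<in> {1..p} \<longrightarrow> l < l' \<longrightarrow> (\<forall>u \<in> f {l} - f {}. \<forall>w \<in> f {l'} - f {}. u \<le> w))"

lemma INV_gen:
  assumes "C \<subseteq> {1..q}" "\<And>l. l \<in> {1..p} \<Longrightarrow> l \<in> S \<Longrightarrow> \<phi> l \<in> {1..q}"
    "\<And>l l'. l \<in> {1..p} \<Longrightarrow> l' \<in> {1..p} \<Longrightarrow> l < l' \<Longrightarrow> \<phi> l \<le> \<phi> l'"
    "\<And>x. x \<subseteq> {1..p} \<Longrightarrow> f x = C \<union> \<phi> ` (x \<inter> S)"
  shows "INV p q f"
proof -
  have e: "f {} = C" using assms(4)[of "{}"] by simp
  have s: "\<And>l. l \<in> {1..p} \<Longrightarrow> f {l} - f {} \<subseteq> {\<phi> l}" using assms(4) e by auto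
  show ?thesis unfolding INV_def
  proof (intro conjI allI impI ballI)
    fix x assume "x \<subseteq> {1..p}" then show "f x \<subseteq> {1..q}" using assms(1,2,4) by auto
  next
    fix x y assume "x \<subseteq> {1..p}" "y \<subseteq> {1..p}" then show "f (x \<union> y) = f x \<union> f y"
      using assms(4)[of x] assms(4)[of y] assms(4)[of "x \<union> y"] by auto
  next
    fix l u v assume "l \<in> {1..p}" "u \<in> f {l} - f {}" "v \<in> f {l} - f {}" then show "u = v" using s by blast
  next
    fix l l' u w assume "l \<in> {1..p}" "l' \<in> {1..p}" "l < l'" "u \<in> f {l} - f {}" "w \<in> f {l'} - f {}"
    then show "u \<le> w" using s[of l] s[of l'] assms(3)[of l l'] by auto
  qed
qed

lemma INV_id: "INV p p (rst p id)"
  by (rule INV_gen[where C="{}" and \<phi>=id and S=UNIV]) (auto simp: rst_def)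

lemma INV_face: "1 \<le> i \<Longrightarrow> i \<le> Suc p \<Longrightarrow> INV p (Suc p) (face p i e)"
  apply (rule INV_gen[where C="if e then {i} else {}" and \<phi>="\<lambda>j. if j < i then j else Suc j" and S=UNIV])
  apply (auto simp: face_def rst_def image_iff split: if_splits)
  done

lemma INV_degen: "1 \<le> i \<Longrightarrow> i \<le> Suc p \<Longrightarrow> INV (Suc p) p (degen p i)"
  apply (rule INV_gen[where C="{}" and \<phi>="\<lambda>j. if j < i then j else j - 1" and S="-{i}"])
  apply (auto simp: degen_def rst_def image_iff split: if_splits)
  done

lemma conn_img: "{j \<in> x. j < i} \<union> (if i \<in> x \<or> Suc i \<in> x then {i} else {}) \<union> (\<lambda>j. j - 1) ` {j \<in> x. j > Suc i}
   = (\<lambda>j. if j \<le> i then j else j - 1) ` x" (is "?L = ?R")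
proof (rule set_eqI, rule iffI)
  fix y assume "y \<in> ?L" then show "y \<in> ?R"
    by (auto simp: image_iff split: if_splits intro: bexI[where x="Suc i"] bexI[where x=i])
next
  fix y assume "y \<in> ?R"
  then obtain j where j: "j \<in> x" "y = (if j \<le> i then j else j - 1)" by auto
  consider "j < i" | "j = i" | "j = Suc i" | "j > Suc i" by linarith
  then show "y \<in> ?L" using j by cases auto
qed

lemma INV_conn: "1 \<le> i \<Longrightarrow> i \<le> p \<Longrightarrow> INV (Suc p) p (conn p i)"
  apply (rule INV_gen[where C="{}" and \<phi>="\<lambda>j. if j \<le> i then j else j - 1" and S="UNIV"])
     apply (auto simp: rst_def split: if_splits)[3]
  apply (simp only: conn_def rst_def conn_img)
  apply simp
  done



lemma INV_rng: "INV p q f \<Longrightarrow> x \<subseteq> {1..p} \<Longrightarrow> f x \<subseteq> {1..q}"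
  unfolding INV_def by meson
lemma INV_un: "INV p q f \<Longrightarrow> x \<subseteq> {1..p} \<Longrightarrow> y \<subseteq> {1..p} \<Longrightarrow> f (x \<union> y) = f x \<union> f y"
  unfolding INV_def by meson
lemma INV_sing: "INV p q f \<Longrightarrow> l\<in>{1..p} \<Longrightarrow> u \<in> f {l} - f {} \<Longrightarrow> v \<in> f {l} - f {} \<Longrightarrow> u = v"
  unfolding INV_def by meson
lemma INV_ord: "INV p q f \<Longrightarrow> l \<in> {1..p} \<Longrightarrow> l' \<in> {1..p} \<Longrightarrow> l < l' \<Longrightarrow> u \<in> f {l} - f {} \<Longrightarrow> w \<in> f {l'} - f {} \<Longrightarrow> u \<le> w"
  unfolding INV_def by meson

lemma INV_cmp:
  assumes f: "INV p q f" and g: "INV q r g"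
  shows "INV p r (cmp p g f)"
proof -
  have cm: "\<And>x. x \<subseteq> {1..p} \<Longrightarrow> cmp p g f x = g (f x)" by (simp add: cmp_def rst_def)
  note fr = INV_rng[OF f]
  note gr = INV_rng[OF g]
  note fu = INV_un[OF f]
  note gu = INV_un[OF g]
  note fs = INV_sing[OF f]
  note gs = INV_sing[OF g]
  note fo = INV_ord[OF f]
  note go = INV_ord[OF g]
  have fmono: "\<And>l. l \<in> {1..p} \<Longrightarrow> f {} \<subseteq> f {l}"
  proof -
    fix l assume "l \<in> {1..p}"
    then have "f ({} \<union> {l}) = f {} \<union> f {l}" by (intro fu) auto
    then show "f {} \<subseteq> f {l}" by (metis Un_empty_left Un_upper1)
  qed
  have gmono: "\<And>x. x \<subseteq> {1..q} \<Longrightarrow> g {} \<subseteq> g x"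
  proof -
    fix x assume "x \<subseteq> {1..q}"
    then have "g ({} \<union> x) = g {} \<union> g x" by (intro gu) auto
    then show "g {} \<subseteq> g x" by (metis Un_empty_left Un_upper1)
  qed
  have key: "\<And>l u. l \<in> {1..p} \<Longrightarrow> u \<in> g (f {l}) - g (f {}) \<Longrightarrow> \<exists>k. k \<in> f {l} - f {} \<and> u \<in> g {k} - g {}"
  proof -
    fix l u assume l: "l \<in> {1..p}" and u: "u \<in> g (f {l}) - g (f {})"
    show "\<exists>k. k \<in> f {l} - f {} \<and> u \<in> g {k} - g {}"
    proof (cases "f {l} = f {}")
      case True then show ?thesis using u by simp
    next
      case False
      then obtain k where k: "k \<in> f {l} - f {}" using fmono[OF l] by blast
      have "f {l} = f {} \<union> {k}"
      proof
        show "f {l} \<subseteq> f {} \<union> {k}"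
        proof
          fix u assume u1: "u \<in> f {l}"
          show "u \<in> f {} \<union> {k}"
          proof (cases "u \<in> f {}")
            case True then show ?thesis by blast
          next
            case False then have "u \<in> f {l} - f {}" using u1 by blast
            then have "u = k" using fs[OF l _ k] by blast
            then show ?thesis by blast
          qed
        qed
        show "f {} \<union> {k} \<subseteq> f {l}" using fmono[OF l] k by blast
      qed
      moreover have "f {} \<subseteq> {1..q}" using fr[of "{}"] by simp
      moreover have "{k} \<subseteq> {1..q}" using fr[of "{l}"] l k by auto
      ultimately have "g (f {l}) = g (f {}) \<union> g {k}" using gu[of "f {}" "{k}"] by simp
      moreover have "g {} \<subseteq> g (f {})" using gmono fr[of "{}"] by simp
      ultimately show ?thesis using u k by blast
    qed
  qed
  have krng: "\<And>l k. l \<in> {1..p} \<Longrightarrow> k \<in> f {l} \<Longrightarrow> k \<in> {1..q}"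
  proof -
    fix l k assume "l \<in> {1..p}" "k \<in> f {l}" then show "k \<in> {1..q}" using fr[of "{l}"] by auto
  qed
  show ?thesis unfolding INV_def
  proof (intro conjI allI impI ballI)
    fix x assume "x \<subseteq> {1..p}" then show "cmp p g f x \<subseteq> {1..r}" using cm fr gr by simp
  next
    fix x y assume "x \<subseteq> {1..p}" "y \<subseteq> {1..p}" then show "cmp p g f (x \<union> y) = cmp p g f x \<union> cmp p g f y"
      using cm fu gu fr by simp
  next
    fix l u v assume l: "l \<in> {1..p}" and "u \<in> cmp p g f {l} - cmp p g f {}" "v \<in> cmp p g f {l} - cmp p g f {}"
    then have "u \<in> g (f {l}) - g (f {})" "v \<in> g (f {l}) - g (f {})" using cm[of "{l}"] cm[of "{}"] by auto
    then obtain k k' where kk: "k \<in> f {l} - f {}" "u \<in> g {k} - g {}" "k' \<in> f {l} - f {}" "v \<in> g {k'} - g {}"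
      using key[OF l] by blast
    have "k = k'" using fs[OF l kk(1) kk(3)] .
    moreover have "k \<in> {1..q}" using krng[OF l] kk(1) by blast
    ultimately show "u = v" using gs[of k u v] kk by blast
  next
    fix l l' u w assume l: "l \<in> {1..p}" and l': "l' \<in> {1..p}" and ll: "l < l'"
      and "u \<in> cmp p g f {l} - cmp p g f {}" "w \<in> cmp p g f {l'} - cmp p g f {}"
    then have "u \<in> g (f {l}) - g (f {})" "w \<in> g (f {l'}) - g (f {})" using cm[of "{l}"] cm[of "{l'}"] cm[of "{}"] by auto
    then obtain k k' where kk: "k \<in> f {l} - f {}" "u \<in> g {k} - g {}" "k' \<in> f {l'} - f {}" "w \<in> g {k'} - g {}"
      using key[OF l] key[OF l'] by blast
    have "k \<le> k'" using fo[OF l l' ll] kk by blast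
    then consider "k = k'" | "k < k'" by linarith
    then show "u \<le> w"
    proof cases
      case 1
      moreover have "k \<in> {1..q}" using krng[OF l] kk(1) by blast
      ultimately show ?thesis using gs[of k u w] kk by simp
    next
      case 2
      moreover have "k \<in> {1..q}" using krng[OF l] kk(1) by blast
      moreover have "k' \<in> {1..q}" using krng[OF l'] kk(3) by blast
      ultimately show ?thesis using go[of k k' u w] kk by blast
    qed
  qed
qed

lemma cmor_INV: "cmor p q f \<Longrightarrow> INV p q f"
proof (induction rule: cmor.induct)
  case (cmor_id p) then show ?case by (rule INV_id)
next
  case (cmor_face i p e) then show ?case by (rule INV_face)
next
  case (cmor_degen i p) then show ?case by (rule INV_degen)
next
  case (cmor_conn i p) then show ?case by (rule INV_conn)
next
  case (cmor_comp p q f r g) then show ?case using INV_cmp by blast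
qed

lemma rst_rst: "rst p (rst p h) = rst p h"
  by (rule ext) (simp add: rst_def)

lemma cmor_rst: "cmor p q f \<Longrightarrow> rst p f = f"
  by (induction rule: cmor.induct) (simp_all only: face_def degen_def conn_def cmp_def rst_rst)



lemma chain_Nil[simp]: "chain s t x y [] \<longleftrightarrow> x = y"
  by (simp add: chain_def)

lemma chain_Cons[simp]: "chain s t x y (c # cs) \<longleftrightarrow> s c = x \<and> chain s t (t c) y cs"
proof (cases cs)
  case Nil then show ?thesis by (auto simp: chain_def)
next
  case (Cons d ds)
  have "(\<forall>i. Suc i < length (c # d # ds) \<longrightarrow> t ((c # d # ds) ! i) = s ((c # d # ds) ! Suc i)) \<longleftrightarrow>
        t c = s d \<and> (\<forall>i. Suc i < length (d # ds) \<longrightarrow> t ((d # ds) ! i) = s ((d # ds) ! Suc i))"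
    (is "?L \<longleftrightarrow> ?R")
  proof
    assume L: ?L
    show ?R
    proof (intro conjI allI impI)
      show "t c = s d" using L[rule_format, of 0] by simp
      fix i assume "Suc i < length (d # ds)" then show "t ((d # ds) ! i) = s ((d # ds) ! Suc i)"
        using L[rule_format, of "Suc i"] by simp
    qed
  next
    assume R: ?R
    show ?L
    proof (intro allI impI)
      fix i assume i: "Suc i < length (c # d # ds)"
      show "t ((c # d # ds) ! i) = s ((c # d # ds) ! Suc i)"
      proof (cases i)
        case 0 then show ?thesis using R by simp
      next
        case (Suc i') then show ?thesis using R i by simp
      qed
    qed
  qed
  then show ?thesis using Cons by (auto simp: chain_def)
qed

lemma chain_append: "chain s t x y (cs @ ds) \<longleftrightarrow> (\<exists>z. chain s t x z cs \<and> chain s t z y ds)"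
  by (induction cs arbitrary: x) auto

lemma rst_eqI: "(\<And>x. x \<subseteq> {1..p} \<Longrightarrow> f x = g x) \<Longrightarrow> rst p f = rst p g"
  by (rule ext) (simp add: rst_def)

lemma sub1_cases: "x \<subseteq> {1..Suc 0} \<Longrightarrow> x = {} \<or> x = {1}"
  by auto

lemma cell_form: "cmor 1 n e \<Longrightarrow> e = rst 1 (\<lambda>x. if 1 \<in> x then tgt e else src e)"
proof -
  assume "cmor 1 n e"
  then have "e = rst 1 e" using cmor_rst by metis
  also have "\<dots> = rst 1 (\<lambda>x. if 1 \<in> x then tgt e else src e)"
  proof (rule rst_eqI)
    fix x :: "nat set" assume "x \<subseteq> {1..1}"
    then have "x = {} \<or> x = {1}" by auto
    then show "e x = (if 1 \<in> x then tgt e else src e)" by (auto simp: src_def tgt_def)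
  qed
  finally show ?thesis .
qed

lemma cell_eq: "cmor 1 n e \<Longrightarrow> cmor 1 n' e' \<Longrightarrow> src e = src e' \<Longrightarrow> tgt e = tgt e' \<Longrightarrow> e = e'"
  using cell_form by metis

lemma cell_props:
  assumes "cmor 1 n e"
  shows "src e \<subseteq> tgt e" "tgt e \<subseteq> {1..n}" "src e \<subseteq> {1..n}" "\<exists>k. tgt e \<subseteq> insert k (src e)"
proof -
  have I: "INV 1 n e" using assms by (rule cmor_INV)
  have "e ({} \<union> {1}) = e {} \<union> e {1}" using INV_un[OF I, of "{}" "{1}"] by simp
  then show "src e \<subseteq> tgt e" by (auto simp: src_def tgt_def)
  show "tgt e \<subseteq> {1..n}" using INV_rng[OF I, of "{1}"] by (simp add: tgt_def)
  show "src e \<subseteq> {1..n}" using INV_rng[OF I, of "{}"] by (simp add: src_def)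
  show "\<exists>k. tgt e \<subseteq> insert k (src e)"
  proof (cases "tgt e \<subseteq> src e")
    case True then show ?thesis by blast
  next
    case False
    then obtain k where k: "k \<in> tgt e - src e" by blast
    have "tgt e \<subseteq> insert k (src e)"
    proof
      fix u assume "u \<in> tgt e"
      then show "u \<in> insert k (src e)" using INV_sing[OF I, of 1 u k] k by (auto simp: src_def tgt_def)
    qed
    then show ?thesis by blast
  qed
qed

lemma dgn_cell_eq: "dgn_cell v = rst 1 (\<lambda>_. v)"
  unfolding dgn_cell_def cmp_def
proof (rule rst_eqI)
  fix x :: "nat set" assume "x \<subseteq> {1..1}"
  then have "x = {} \<or> x = {1}" by auto
  then show "rst 0 (\<lambda>_. v) (degen 0 1 x) = v" by (auto simp: rst_def degen_def)
qed

lemma dgn_src[simp]: "src (dgn_cell v) = v" and dgn_tgt[simp]: "tgt (dgn_cell v) = v"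
  by (simp_all add: dgn_cell_eq src_def tgt_def rst_def)

lemma deg_cell: assumes "cmor 1 n e" "src e = tgt e" shows "e = dgn_cell (src e)"
proof -
  have "e = rst 1 (\<lambda>x. if 1 \<in> x then tgt e else src e)" using cell_form[OF assms(1)] .
  also have "\<dots> = rst 1 (\<lambda>_. src e)" using assms(2) by (intro rst_eqI) simp
  finally show ?thesis by (simp add: dgn_cell_eq)
qed

definition contrib :: "(nat set \<Rightarrow> nat set) \<Rightarrow> nat list" where
  "contrib e = sorted_list_of_set (tgt e - src e)"

definition dseq :: "(nat set \<Rightarrow> nat set) list \<Rightarrow> nat list" where
  "dseq es = concat (map contrib es)"

lemma dseq_simps[simp]: "dseq [] = []" "dseq (e # es) = contrib e @ dseq es" "dseq (xs @ ys) = dseq xs @ dseq ys"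
  by (simp_all add: dseq_def)

lemma contrib_deg: "src e = tgt e \<Longrightarrow> contrib e = []"
  by (simp add: contrib_def)

lemma nondeg_cell: "cmor 1 n e \<Longrightarrow> src e \<noteq> tgt e \<Longrightarrow> \<exists>k. k \<notin> src e \<and> tgt e = insert k (src e) \<and> contrib e = [k]"
proof -
  assume c: "cmor 1 n e" and ne: "src e \<noteq> tgt e"
  obtain k where k: "tgt e \<subseteq> insert k (src e)" using cell_props(4)[OF c] by blast
  have s: "src e \<subseteq> tgt e" using cell_props(1)[OF c] .
  have "k \<notin> src e \<and> tgt e = insert k (src e)" using k s ne by blast
  moreover then have "tgt e - src e = {k}" by blast
  ultimately show ?thesis by (simp add: contrib_def)
qed

lemma contrib_cell: "cmor 1 n e \<Longrightarrow> distinct (contrib e) \<and> set (contrib e) = tgt e - src e"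
proof -
  assume c: "cmor 1 n e"
  have "finite (tgt e)" using cell_props(2)[OF c] finite_subset by blast
  then show ?thesis by (simp add: contrib_def)
qed

lemma dseq_Sigma: "(\<forall>e\<in>set es. cmor 1 n e) \<Longrightarrow> chain src tgt v b es \<Longrightarrow>
   distinct (dseq es) \<and> set (dseq es) = b - v \<and> v \<subseteq> b"
proof (induction es arbitrary: v)
  case Nil then show ?case by simp
next
  case (Cons e es)
  have c: "cmor 1 n e" using Cons.prems by simp
  have IH: "distinct (dseq es) \<and> set (dseq es) = b - tgt e \<and> tgt e \<subseteq> b"
    using Cons.IH[of "tgt e"] Cons.prems by simp
  have v: "src e = v" using Cons.prems by simp
  show ?case using IH contrib_cell[OF c] cell_props(1)[OF c] v by auto
qed



definition red :: "(nat set \<Rightarrow> nat set) list \<Rightarrow> (nat set \<Rightarrow> nat set) list" where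
  "red es = filter (\<lambda>e. src e \<noteq> tgt e) es"

lemma red_simps[simp]: "red [] = []"
  "red (e # es) = (if src e = tgt e then red es else e # red es)"
  by (simp_all add: red_def)

fun hh :: "nat \<Rightarrow> (nat set \<Rightarrow> nat set) list \<Rightarrow> icell list" where
  "hh j [] = []"
| "hh j (e # es) = (if src e = tgt e then IDeg j # hh j es else IEdge (Suc j) # hh (Suc j) es)"

lemma chain_red: "chain src tgt v b es \<Longrightarrow> chain src tgt v b (red es)"
  by (induction es arbitrary: v) auto

lemma dseq_red: "dseq (red es) = dseq es"
  by (induction es) (auto simp: contrib_deg)

lemma hh_main:
  "(\<forall>e\<in>set es. cmor 1 n e) \<Longrightarrow> chain src tgt v b es \<Longrightarrow> drop j ys = red es \<Longrightarrow> j \<le> length ys \<Longrightarrow>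
   pvert a ys j = v \<Longrightarrow>
   map (icomp a ys) (hh j es) = es \<and> (\<forall>c\<in>set (hh j es). ivalid (length ys) c) \<and>
   chain isrc itgt j (length ys) (hh j es)"
proof (induction es arbitrary: j v)
  case Nil then show ?case by simp
next
  case (Cons e es)
  have c: "cmor 1 n e" and cs: "\<forall>e\<in>set es. cmor 1 n e" using Cons.prems(1) by auto
  have se: "src e = v" and ch: "chain src tgt (tgt e) b es" using Cons.prems(2) by auto
  show ?case
  proof (cases "src e = tgt e")
    case True
    have d: "drop j ys = red es" using Cons.prems(3) True by simp
    have IH: "map (icomp a ys) (hh j es) = es \<and> (\<forall>c\<in>set (hh j es). ivalid (length ys) c) \<and>
       chain isrc itgt j (length ys) (hh j es)"
      using Cons.IH[OF cs ch d Cons.prems(4)] Cons.prems(5) se True by simp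
    have "icomp a ys (IDeg j) = e" using deg_cell[OF c True] Cons.prems(5) se by simp
    then show ?thesis using IH True Cons.prems(4) by simp
  next
    case False
    have d0: "drop j ys = e # red es" using Cons.prems(3) False by simp
    then have jl: "j < length ys" by (metis drop_eq_Nil2 list.distinct(1) not_le_imp_less)
    have yj: "ys ! j = e" and d: "drop (Suc j) ys = red es"
      using d0 jl by (simp_all add: Cons_nth_drop_Suc[OF jl, symmetric])
    have pv: "pvert a ys (Suc j) = tgt e" using yj by (simp add: pvert_def)
    have IH: "map (icomp a ys) (hh (Suc j) es) = es \<and> (\<forall>c\<in>set (hh (Suc j) es). ivalid (length ys) c) \<and>
       chain isrc itgt (Suc j) (length ys) (hh (Suc j) es)"
      using Cons.IH[OF cs ch d _ pv] jl by simp
    then show ?thesis using False yj jl by simp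
  qed
qed

lemma is_path_red: "is_path n a b x \<Longrightarrow> is_path n a b (red x)"
  by (auto simp: is_path_def red_def intro: chain_red[unfolded red_def])

lemma path_rel0_red: "is_path n a b x \<Longrightarrow> path_rel0 n a b x (red x)"
proof -
  assume p: "is_path n a b x"
  have "map (icomp a (red x)) (hh 0 x) = x \<and> (\<forall>c\<in>set (hh 0 x). ivalid (length (red x)) c) \<and>
    chain isrc itgt 0 (length (red x)) (hh 0 x)"
    using p by (intro hh_main[of x n a b]) (auto simp: is_path_def pvert_def)
  then show ?thesis using p is_path_red[OF p] unfolding path_rel0_def imap_def by metis
qed

lemma icomp_dseq:
  "chain isrc itgt j (length y) h \<Longrightarrow> \<forall>c\<in>set h. ivalid (length y) c \<Longrightarrow>
   dseq (map (icomp a y) h) = dseq (drop j y)"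
proof (induction h arbitrary: j)
  case Nil then show ?case by simp
next
  case (Cons c h)
  show ?case
  proof (cases c)
    case (IDeg j')
    then have "chain isrc itgt j (length y) h" "\<forall>c\<in>set h. ivalid (length y) c" using Cons.prems by auto
    then show ?thesis using Cons.IH[of j] IDeg by (simp add: contrib_deg)
  next
    case (IEdge j')
    then have j': "j' = Suc j" "j' \<le> length y" using Cons.prems by auto
    then have "drop j y = y ! j # drop (Suc j) y" by (simp add: Cons_nth_drop_Suc)
    then show ?thesis using Cons IEdge j' by simp
  qed
qed

lemma path_rel0_dseq: "path_rel0 n a b x y \<Longrightarrow> dseq x = dseq y"
  unfolding path_rel0_def imap_def using icomp_dseq[of 0 y _ a] by auto

lemma pathEq_dseq: "pathEq n a b x y \<Longrightarrow> dseq x = dseq y"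
  unfolding pathEq_def
  by (induction rule: equivclp_induct) (auto dest: path_rel0_dseq)

lemma pathEq_path: "pathEq n a b x y \<Longrightarrow> x = y \<or> (is_path n a b x \<and> is_path n a b y)"
  unfolding pathEq_def
  by (induction rule: equivclp_induct) (auto simp: path_rel0_def)

lemma red_inj:
  "(\<forall>e\<in>set xs. cmor 1 n e \<and> src e \<noteq> tgt e) \<Longrightarrow> (\<forall>e\<in>set ys. cmor 1 n e \<and> src e \<noteq> tgt e) \<Longrightarrow>
   chain src tgt v b xs \<Longrightarrow> chain src tgt v b' ys \<Longrightarrow> dseq xs = dseq ys \<Longrightarrow> xs = ys"
proof (induction xs arbitrary: ys v)
  case Nil
  show ?case
  proof (cases ys)
    case (Cons e ys')
    then obtain k where "contrib e = [k]" using nondeg_cell Nil.prems(2) by fastforce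
    then show ?thesis using Nil.prems(5) Cons by simp
  qed simp
next
  case (Cons e xs)
  have ce: "cmor 1 n e" "src e \<noteq> tgt e" using Cons.prems(1) by auto
  obtain k where k: "k \<notin> src e" "tgt e = insert k (src e)" "contrib e = [k]" using nondeg_cell[OF ce] by blast
  show ?case
  proof (cases ys)
    case Nil then show ?thesis using Cons.prems(5) k by simp
  next
    case (Cons e' ys')
    have ce': "cmor 1 n e'" "src e' \<noteq> tgt e'" using Cons.prems(2) \<open>ys = e' # ys'\<close> by auto
    obtain k' where k': "k' \<notin> src e'" "tgt e' = insert k' (src e')" "contrib e' = [k']" using nondeg_cell[OF ce'] by blast
    have kk: "k = k'" and dd: "dseq xs = dseq ys'" using Cons.prems(5) \<open>ys = e' # ys'\<close> k k' by auto
    have s: "src e = v" "src e' = v" using Cons.prems(3,4) \<open>ys = e' # ys'\<close> by auto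
    have ee: "e = e'" using cell_eq[OF ce(1) ce'(1)] s k k' kk by simp
    have "xs = ys'" using Cons.IH[of ys' "tgt e"] Cons.prems \<open>ys = e' # ys'\<close> ee dd by auto
    then show ?thesis using ee \<open>ys = e' # ys'\<close> by simp
  qed
qed

lemma same_dseq_pathEq:
  assumes x: "is_path n a b x" and y: "is_path n a b y" and d: "dseq x = dseq y"
  shows "pathEq n a b x y"
proof -
  have "red x = red y"
    using x y d
    by (intro red_inj[of "red x" n "red y" a b b]) (auto simp: is_path_def red_def dseq_red[unfolded red_def] intro: chain_red[unfolded red_def])
  moreover have "pathEq n a b x (red x)" "pathEq n a b y (red y)"
    using path_rel0_red[OF x] path_rel0_red[OF y] unfolding pathEq_def by auto
  ultimately show ?thesis unfolding pathEq_def by (metis equivclp_sym equivclp_trans)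
qed



definition sh :: "nat \<Rightarrow> nat \<Rightarrow> nat" where "sh c j = (if j < c then j else j - 1)"
definition del :: "nat \<Rightarrow> nat set \<Rightarrow> nat set" where "del c s = sh c ` (s - {c})"
definition ins :: "nat \<Rightarrow> bool \<Rightarrow> nat set \<Rightarrow> nat set" where
  "ins c e s = (\<lambda>j. if j < c then j else Suc j) ` s \<union> (if e then {c} else {})"

lemma face_eq: "face p i e = rst p (ins i e)"
  unfolding face_def ins_def
  by (rule rst_eqI) (auto simp: image_iff)

lemma sh_back: "j \<noteq> c \<Longrightarrow> (if sh c j < c then sh c j else Suc (sh c j)) = j"
  by (auto simp: sh_def)

lemma ins_del0: "ins c b (del c s) = (s - {c}) \<union> (if b then {c} else {})"
proof -
  have "(\<lambda>j. if j < c then j else Suc j) ` (sh c ` (s - {c})) = (\<lambda>j. (if sh c j < c then sh c j else Suc (sh c j))) ` (s - {c})"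
    by (rule image_image)
  also have "\<dots> = id ` (s - {c})" by (rule image_cong) (auto simp: sh_back)
  finally show ?thesis by (simp add: ins_def del_def)
qed

lemma ins_del: "ins c (c \<in> s) (del c s) = s"
  by (auto simp: ins_del0)

lemma sh_rng: "k \<in> {1..Suc q} \<Longrightarrow> c \<in> {1..Suc q} \<Longrightarrow> k \<noteq> c \<Longrightarrow> sh c k \<in> {1..q}"
  by (auto simp: sh_def)

lemma del_rng: "s \<subseteq> {1..Suc q} \<Longrightarrow> c \<in> {1..Suc q} \<Longrightarrow> del c s \<subseteq> {1..q}"
  unfolding del_def using sh_rng by blast

lemma sh_inj: "k \<noteq> c \<Longrightarrow> k' \<noteq> c \<Longrightarrow> sh c k = sh c k' \<Longrightarrow> k = k'"
  by (auto simp: sh_def split: if_splits)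

lemma sh_mono: "k \<noteq> c \<Longrightarrow> k' \<noteq> c \<Longrightarrow> k < k' \<Longrightarrow> sh c k < sh c k'"
  by (auto simp: sh_def)

lemma sh_notin: "k \<noteq> c \<Longrightarrow> k \<notin> v \<Longrightarrow> sh c k \<notin> del c v"
  unfolding del_def using sh_inj by blast

lemma del_insert: "k \<noteq> c \<Longrightarrow> del c (insert k s) = insert (sh c k) (del c s)"
  by (auto simp: del_def)

lemma del_Un: "del c (A \<union> B) = del c A \<union> del c B"
  by (auto simp: del_def)

lemma del_empty: "del c {} = {}"
  by (simp add: del_def)

lemma del_single: "k \<noteq> c \<Longrightarrow> del c {k} = {sh c k}"
  by (simp add: del_def)

lemma cmor_lift:
  assumes "cmor p q (rst p g')" "c \<in> {1..Suc q}"
    "\<And>x. x \<subseteq> {1..p} \<Longrightarrow> g' x \<subseteq> {1..q} \<and> ins c e (g' x) = g x"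
  shows "cmor p (Suc q) (rst p g)"
proof -
  have "cmor p (Suc q) (cmp p (face q c e) (rst p g'))"
    using assms(1,2) by (intro cmor_comp[OF assms(1)] cmor_face) auto
  moreover have "cmp p (face q c e) (rst p g') = rst p g"
    unfolding cmp_def face_eq
  proof (rule rst_eqI)
    fix x assume x: "x \<subseteq> {1..p}"
    have "rst p g' x = g' x" using x by (simp add: rst_def)
    then show "rst q (ins c e) (rst p g' x) = g x" using assms(3)[OF x] by (simp add: rst_def)
  qed
  ultimately show ?thesis by simp
qed

lemma edge_build:
  "v \<subseteq> {1..q} \<Longrightarrow> k \<in> {1..q} \<Longrightarrow> k \<notin> v \<Longrightarrow> cmor 1 q (rst 1 (\<lambda>x. if 1 \<in> x then insert k v else v))"
proof (induction q arbitrary: v k)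
  case 0 then show ?case by simp
next
  case (Suc q)
  show ?case
  proof (cases "q = 0")
    case True
    then have "k = 1" "v = {}" using Suc.prems by auto
    then have "rst 1 (\<lambda>x. if 1 \<in> x then insert k v else v) = rst 1 id"
    proof (intro rst_eqI)
      fix x :: "nat set" assume "k = 1" "v = {}" "x \<subseteq> {1..1}"
      then have "x = {} \<or> x = {1}" by auto
      then show "(if 1 \<in> x then insert k v else v) = id x" using \<open>k = 1\<close> \<open>v = {}\<close> by auto
    qed
    then show ?thesis using True cmor_id[of 1] by simp
  next
    case False
    define c where "c = (if k = 1 then 2 else (1::nat))"
    have c: "c \<in> {1..Suc q}" "c \<noteq> k" using False by (auto simp: c_def)
    define g where "g = (\<lambda>x::nat set. if 1 \<in> x then insert k v else v)"
    have r1: "del c v \<subseteq> {1..q}" using Suc.prems(1) c(1) by (rule del_rng)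
    have r2: "sh c k \<in> {1..q}" using Suc.prems(2) c(1) c(2)[symmetric] by (rule sh_rng)
    have IH: "cmor 1 q (rst 1 (\<lambda>x. if 1 \<in> x then insert (sh c k) (del c v) else del c v))"
      using Suc.IH[OF r1 r2 sh_notin[OF c(2)[symmetric] Suc.prems(3)]] .
    have "cmor 1 (Suc q) (rst 1 g)"
    proof (rule cmor_lift[OF IH c(1)])
      fix x :: "nat set" assume "x \<subseteq> {1..1}"
      note r = r1 r2
      have eq: "(if 1 \<in> x then insert (sh c k) (del c v) else del c v) = del c (g x)"
        using c by (simp add: g_def del_insert)
      have cv: "c \<in> g x \<longleftrightarrow> c \<in> v" using c by (simp add: g_def)
      have G1: "(if 1 \<in> x then insert (sh c k) (del c v) else del c v) \<subseteq> {1..q}" using r by auto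
      have "ins c (c \<in> v) (if 1 \<in> x then insert (sh c k) (del c v) else del c v) = ins c (c \<in> g x) (del c (g x))"
        using eq cv by simp
      also have "\<dots> = g x" by (rule ins_del)
      finally show "(if 1 \<in> x then insert (sh c k) (del c v) else del c v) \<subseteq> {1..q} \<and>
          ins c (c \<in> v) (if 1 \<in> x then insert (sh c k) (del c v) else del c v) = g x"
        using G1 by blast
    qed
    then show ?thesis by (simp add: g_def)
  qed
qed



lemma sq_build:
  "v \<subseteq> {1..q} \<Longrightarrow> i \<in> {1..q} \<Longrightarrow> j \<in> {1..q} \<Longrightarrow> i < j \<Longrightarrow> i \<notin> v \<Longrightarrow> j \<notin> v \<Longrightarrow>
   cmor 2 q (rst 2 (\<lambda>x. v \<union> (if 1 \<in> x then {i} else {}) \<union> (if 2 \<in> x then {j} else {})))"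
proof (induction q arbitrary: v i j)
  case 0 then show ?case by simp
next
  case (Suc q)
  show ?case
  proof (cases "q \<le> 1")
    case True
    then have ij0: "i = 1" "j = 2" "q = 1" using Suc.prems by auto
    then have "v \<subseteq> {1..2} - {i, j}" using Suc.prems by auto
    then have "v = {}" using ij0 by auto
    note ij = ij0 this
    then have "rst 2 (\<lambda>x. v \<union> (if 1 \<in> x then {i} else {}) \<union> (if 2 \<in> x then {j} else {})) = rst 2 id"
    proof (intro rst_eqI)
      fix x :: "nat set" assume "x \<subseteq> {1..2}"
      then have "\<forall>y\<in>x. y = 1 \<or> y = 2" by fastforce
      then show "v \<union> (if 1 \<in> x then {i} else {}) \<union> (if 2 \<in> x then {j} else {}) = id x"
        using ij by auto
    qed
    moreover have sq2: "Suc q = 2" using True Suc.prems by auto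
    ultimately show ?thesis using cmor_id[of 2] by (simp only: sq2)
  next
    case False
    define c where "c = (if 1 \<notin> {i,j} then 1 else if 2 \<notin> {i,j} then 2 else (3::nat))"
    have c: "c \<in> {1..Suc q}" "c \<noteq> i" "c \<noteq> j" using False Suc.prems(4) by (auto simp: c_def)
    define g where "g = (\<lambda>x::nat set. v \<union> (if 1 \<in> x then {i} else {}) \<union> (if 2 \<in> x then {j} else {}))"
    have r1: "del c v \<subseteq> {1..q}" using Suc.prems(1) c(1) by (rule del_rng)
    have r2: "sh c i \<in> {1..q}" using Suc.prems(2) c(1) c(2)[symmetric] by (rule sh_rng)
    have r3: "sh c j \<in> {1..q}" using Suc.prems(3) c(1) c(3)[symmetric] by (rule sh_rng)
    have r4: "sh c i < sh c j" using sh_mono[OF c(2)[symmetric] c(3)[symmetric] Suc.prems(4)] .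
    define g' where "g' = (\<lambda>x::nat set. del c v \<union> (if 1 \<in> x then {sh c i} else {}) \<union> (if 2 \<in> x then {sh c j} else {}))"
    have IH: "cmor 2 q (rst 2 g')"
      unfolding g'_def
      using Suc.IH[OF r1 r2 r3 r4 sh_notin[OF c(2)[symmetric] Suc.prems(5)] sh_notin[OF c(3)[symmetric] Suc.prems(6)]] .
    have "cmor 2 (Suc q) (rst 2 g)"
    proof (rule cmor_lift[OF IH c(1)])
      fix x :: "nat set" assume "x \<subseteq> {1..2}"
      have eq: "g' x = del c (g x)"
        using c by (simp add: g_def g'_def del_Un del_single del_empty)
      have cv: "c \<in> g x \<longleftrightarrow> c \<in> v" using c by (simp add: g_def)
      have G1: "g' x \<subseteq> {1..q}" using r1 r2 r3 by (auto simp: g'_def)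
      have "ins c (c \<in> v) (g' x) = ins c (c \<in> g x) (del c (g x))"
        using eq cv by simp
      also have "\<dots> = g x" by (rule ins_del)
      finally show "g' x \<subseteq> {1..q} \<and> ins c (c \<in> v) (g' x) = g x" using G1 by blast
    qed
    then show ?thesis by (simp add: g_def)
  qed
qed

definition edge :: "nat set \<Rightarrow> nat \<Rightarrow> nat set \<Rightarrow> nat set" where
  "edge v k = rst 1 (\<lambda>x. if 1 \<in> x then insert k v else v)"

lemma edge_src[simp]: "src (edge v k) = v" and edge_tgt[simp]: "tgt (edge v k) = insert k v"
  by (simp_all add: edge_def src_def tgt_def rst_def)

lemma edge_cmor: "v \<subseteq> {1..n} \<Longrightarrow> k \<in> {1..n} \<Longrightarrow> k \<notin> v \<Longrightarrow> cmor 1 n (edge v k)"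
  unfolding edge_def by (rule edge_build)

lemma edge_contrib: "k \<notin> v \<Longrightarrow> contrib (edge v k) = [k]"
proof -
  assume "k \<notin> v"
  then have "insert k v - v = {k}" by blast
  then show ?thesis by (simp add: contrib_def)
qed

fun mk :: "nat set \<Rightarrow> nat list \<Rightarrow> (nat set \<Rightarrow> nat set) list" where
  "mk v [] = []"
| "mk v (k # ks) = edge v k # mk (insert k v) ks"

lemma mk_append: "mk v (p @ q) = mk v p @ mk (v \<union> set p) q"
  by (induction p arbitrary: v) auto

lemma mk_props:
  "v \<subseteq> {1..n} \<Longrightarrow> distinct ks \<Longrightarrow> set ks \<subseteq> {1..n} \<Longrightarrow> set ks \<inter> v = {} \<Longrightarrow>
   (\<forall>e\<in>set (mk v ks). cmor 1 n e) \<and> chain src tgt v (v \<union> set ks) (mk v ks) \<and> dseq (mk v ks) = ks"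
proof (induction ks arbitrary: v)
  case Nil then show ?case by simp
next
  case (Cons k ks)
  have k: "k \<in> {1..n}" "k \<notin> v" using Cons.prems by auto
  have IH: "(\<forall>e\<in>set (mk (insert k v) ks). cmor 1 n e) \<and> chain src tgt (insert k v) (insert k v \<union> set ks) (mk (insert k v) ks) \<and>
     dseq (mk (insert k v) ks) = ks"
    using Cons.prems by (intro Cons.IH) auto
  show ?case using IH edge_cmor[OF Cons.prems(1) k] edge_contrib[OF k(2)] by simp
qed

lemma mk_path:
  assumes "a \<subseteq> b" "b \<subseteq> {1..n}" "ks \<in> Sigma_seq (b - a)"
  shows "is_path n a b (mk a ks) \<and> dseq (mk a ks) = ks"
proof -
  have ks: "distinct ks" "set ks = b - a" using assms(3) by (auto simp: Sigma_seq_def)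
  have "(\<forall>e\<in>set (mk a ks). cmor 1 n e) \<and> chain src tgt a (a \<union> set ks) (mk a ks) \<and> dseq (mk a ks) = ks"
    using assms ks by (intro mk_props) auto
  moreover have "a \<union> set ks = b" using ks assms(1) by auto
  ultimately show ?thesis using assms by (auto simp: is_path_def)
qed



lemma cmp1_src: "src (cmp 1 c f) = c (f {})" by (simp add: cmp_def rst_def src_def)
lemma cmp1_tgt: "tgt (cmp 1 c f) = c (f {1})" by (simp add: cmp_def rst_def tgt_def)

lemma face_vals:
  "face 1 1 False {} = {}" "face 1 1 False {1} = {2}"
  "face 1 2 True {} = {2}" "face 1 2 True {1} = {1,2}"
  "face 1 2 False {} = {}" "face 1 2 False {1} = {1}"
  "face 1 1 True {} = {1}" "face 1 1 True {1} = {1,2}"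
  by (auto simp: face_eq ins_def rst_def)

lemma sq_contrib:
  assumes "cmor 2 n c"
  defines "S \<equiv> contrib (cmp 1 c (face 1 1 False)) @ contrib (cmp 1 c (face 1 2 True))"
      and "T \<equiv> contrib (cmp 1 c (face 1 2 False)) @ contrib (cmp 1 c (face 1 1 True))"
  shows "S = T \<or> (\<exists>i j. i < j \<and> S = [j, i] \<and> T = [i, j])"
proof -
  have I: "INV 2 n c" using assms(1) by (rule cmor_INV)
  define A0 where "A0 = c {}"
  define A1 where "A1 = c {1}"
  define A2 where "A2 = c {2}"
  have S: "S = sorted_list_of_set (A2 - A0) @ sorted_list_of_set (c {1,2} - A2)"
    unfolding S_def contrib_def cmp1_src cmp1_tgt face_vals A0_def A2_def ..
  have T: "T = sorted_list_of_set (A1 - A0) @ sorted_list_of_set (c {1,2} - A1)"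
    unfolding T_def contrib_def cmp1_src cmp1_tgt face_vals A0_def A1_def ..
  have "c ({1} \<union> {2}) = c {1} \<union> c {2}" by (rule INV_un[OF I]) auto
  then have A12: "c {1,2} = A1 \<union> A2" by (simp add: A1_def A2_def insert_commute)
  have "c ({} \<union> {1}) = c {} \<union> c {1}" by (rule INV_un[OF I]) auto
  then have s1: "A0 \<subseteq> A1" by (auto simp: A0_def A1_def)
  have "c ({} \<union> {2}) = c {} \<union> c {2}" by (rule INV_un[OF I]) auto
  then have s2: "A0 \<subseteq> A2" by (auto simp: A0_def A2_def)
  have d1: "\<And>u v. u \<in> A1 - A0 \<Longrightarrow> v \<in> A1 - A0 \<Longrightarrow> u = v"
    using INV_sing[OF I, of 1] by (auto simp: A0_def A1_def)
  have d2: "\<And>u v. u \<in> A2 - A0 \<Longrightarrow> v \<in> A2 - A0 \<Longrightarrow> u = v"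
    using INV_sing[OF I, of 2] by (auto simp: A0_def A2_def)
  have o: "\<And>u w. u \<in> A1 - A0 \<Longrightarrow> w \<in> A2 - A0 \<Longrightarrow> u \<le> w"
    using INV_ord[OF I, of 1 2] by (auto simp: A0_def A1_def A2_def)
  show ?thesis
  proof (cases "A1 - A0 = {}")
    case True
    then have "A1 = A0" using s1 by blast
    then have e: "c {1,2} - A2 = {}" "c {1,2} - A1 = A2 - A0" using A12 s2 by auto
    have "S = T" unfolding S T e True by simp
    then show ?thesis by blast
  next
    case False
    then obtain u where u: "u \<in> A1 - A0" by blast
    then have D1: "A1 - A0 = {u}" using d1 by blast
    show ?thesis
    proof (cases "A2 - A0 = {}")
      case True
      then have "A2 = A0" using s2 by blast
      then have e: "c {1,2} - A2 = A1 - A0" "c {1,2} - A1 = {}" using A12 s1 by auto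
      have "S = T" unfolding S T e True by simp
      then show ?thesis by blast
    next
      case False
      then obtain w where w: "w \<in> A2 - A0" by blast
      then have D2: "A2 - A0 = {w}" using d2 by blast
      have uw: "u \<le> w" using o u w by blast
      show ?thesis
      proof (cases "u = w")
        case True
        then have e: "c {1,2} - A2 = {}" "c {1,2} - A1 = {}" using A12 D1 D2 s1 s2 by auto
        have "S = T" unfolding S T e D1 D2 True by simp
        then show ?thesis by blast
      next
        case False
        then have e: "c {1,2} - A2 = {u}" "c {1,2} - A1 = {w}" using A12 D1 D2 s1 s2 by auto
        have "S = [w, u]" "T = [u, w]" unfolding S T e D1 D2 by simp_all
        then show ?thesis using uw False by auto
      qed
    qed
  qed
qed

lemma bstep_iff: "bstep xs ys \<longleftrightarrow> (\<exists>p q i j. i < j \<and> xs = p @ [j, i] @ q \<and> ys = p @ [i, j] @ q)"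
proof
  assume "bstep xs ys"
  then obtain k where k: "Suc k < length xs" "xs ! k > xs ! Suc k" "ys = xs[k := xs ! Suc k, Suc k := xs ! k]"
    unfolding bstep_def by blast
  define p where "p = take k xs"
  define q where "q = drop (Suc (Suc k)) xs"
  have "xs = take k xs @ drop k xs" by simp
  also have "drop k xs = xs ! k # drop (Suc k) xs" using k(1) by (simp add: Cons_nth_drop_Suc)
  also have "drop (Suc k) xs = xs ! Suc k # drop (Suc (Suc k)) xs" using k(1) by (simp add: Cons_nth_drop_Suc)
  finally have xs: "xs = p @ [xs ! k, xs ! Suc k] @ q" by (simp add: p_def q_def)
  have lp: "length p = k" using k(1) by (simp add: p_def)
  have "ys = (p @ [xs ! k, xs ! Suc k] @ q)[k := xs ! Suc k, Suc k := xs ! k]" using k(3) xs by metis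
  also have "\<dots> = p @ [xs ! Suc k, xs ! k] @ q" using lp by (simp add: list_update_append)
  finally show "\<exists>p q i j. i < j \<and> xs = p @ [j, i] @ q \<and> ys = p @ [i, j] @ q" using xs k(2) by blast
next
  assume "\<exists>p q i j. i < j \<and> xs = p @ [j, i] @ q \<and> ys = p @ [i, j] @ q"
  then obtain p q i j where h: "i < j" "xs = p @ [j, i] @ q" "ys = p @ [i, j] @ q" by blast
  show "bstep xs ys" unfolding bstep_def
    by (rule exI[of _ "length p"]) (simp add: h nth_append list_update_append)
qed

fun wt :: "nat \<Rightarrow> nat list \<Rightarrow> nat" where
  "wt k [] = 0"
| "wt k (x # xs) = k * x + wt (Suc k) xs"

lemma wt_append: "wt k (p @ q) = wt k p + wt (k + length p) q"
  by (induction p arbitrary: k) auto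

lemma bstep_wt: "bstep xs ys \<Longrightarrow> wt 0 xs < wt 0 ys"
proof -
  assume "bstep xs ys"
  then obtain p q i j where h: "i < j" "xs = p @ [j, i] @ q" "ys = p @ [i, j] @ q" using bstep_iff by blast
  define L where "L = length p"
  have "L * j + Suc L * i < L * i + Suc L * j" using h(1) by simp
  then show ?thesis using h by (simp add: wt_append L_def[symmetric] add.assoc)
qed

lemma bruhat_wt: "bruhat xs ys \<Longrightarrow> xs = ys \<or> wt 0 xs < wt 0 ys"
  unfolding bruhat_def
  by (induction rule: rtranclp_induct) (auto dest: bstep_wt)

lemma bruhat_antisym: assumes "bruhat xs ys" "bruhat ys xs" shows "xs = ys"
  using bruhat_wt[OF assms(1)] bruhat_wt[OF assms(2)] by auto

lemma bstep_Sigma: "bstep xs ys \<Longrightarrow> xs \<in> Sigma_seq A \<Longrightarrow> ys \<in> Sigma_seq A"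
  unfolding bstep_iff Sigma_seq_def by auto

lemma bruhat_Sigma: "bruhat xs ys \<Longrightarrow> xs \<in> Sigma_seq A \<Longrightarrow> ys \<in> Sigma_seq A"
  unfolding bruhat_def
  by (induction rule: rtranclp_induct) (auto dest: bstep_Sigma)



abbreviation RR where "RR n a b \<equiv> (\<lambda>u v. leads1 n a b u v \<or> pathEq n a b u v)"

lemma leads1_bruhat: "leads1 n a b x y \<Longrightarrow> dseq x = dseq y \<or> bstep (dseq x) (dseq y)"
proof -
  assume "leads1 n a b x y"
  then obtain es1 c es2 where c: "cmor 2 n c"
    and px: "pathEq n a b x (es1 @ [cmp 1 c (face 1 1 False), cmp 1 c (face 1 2 True)] @ es2)"
    and py: "pathEq n a b y (es1 @ [cmp 1 c (face 1 2 False), cmp 1 c (face 1 1 True)] @ es2)"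
    unfolding leads1_def by blast
  have dx: "dseq x = dseq es1 @ (contrib (cmp 1 c (face 1 1 False)) @ contrib (cmp 1 c (face 1 2 True))) @ dseq es2"
    using pathEq_dseq[OF px] by simp
  have dy: "dseq y = dseq es1 @ (contrib (cmp 1 c (face 1 2 False)) @ contrib (cmp 1 c (face 1 1 True))) @ dseq es2"
    using pathEq_dseq[OF py] by simp
  from sq_contrib[OF c] show ?thesis
  proof
    assume "contrib (cmp 1 c (face 1 1 False)) @ contrib (cmp 1 c (face 1 2 True)) =
      contrib (cmp 1 c (face 1 2 False)) @ contrib (cmp 1 c (face 1 1 True))"
    then show ?thesis using dx dy by simp
  next
    assume "\<exists>i j. i < j \<and> contrib (cmp 1 c (face 1 1 False)) @ contrib (cmp 1 c (face 1 2 True)) = [j, i] \<and>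
      contrib (cmp 1 c (face 1 2 False)) @ contrib (cmp 1 c (face 1 1 True)) = [i, j]"
    then obtain i j where "i < j" "contrib (cmp 1 c (face 1 1 False)) @ contrib (cmp 1 c (face 1 2 True)) = [j, i]"
      "contrib (cmp 1 c (face 1 2 False)) @ contrib (cmp 1 c (face 1 1 True)) = [i, j]" by blast
    then have "bstep (dseq x) (dseq y)" unfolding bstep_iff dx dy by auto
    then show ?thesis by blast
  qed
qed

lemma RR_bruhat: "(RR n a b)\<^sup>*\<^sup>* u w \<Longrightarrow> bruhat (dseq u) (dseq w)"
proof (induction rule: rtranclp_induct)
  case base then show ?case by (simp add: bruhat_def)
next
  case (step y z)
  from step(2) have "dseq y = dseq z \<or> bstep (dseq y) (dseq z)"
    using leads1_bruhat pathEq_dseq by blast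
  then show ?case using step(3) unfolding bruhat_def by auto
qed

definition sq :: "nat set \<Rightarrow> nat \<Rightarrow> nat \<Rightarrow> nat set \<Rightarrow> nat set" where
  "sq v i j = rst 2 (\<lambda>x. v \<union> (if 1 \<in> x then {i} else {}) \<union> (if 2 \<in> x then {j} else {}))"

lemma sq_vals: "sq v i j {} = v" "sq v i j {1} = insert i v" "sq v i j {2} = insert j v"
  "sq v i j {1,2} = insert i (insert j v)"
  by (auto simp: sq_def rst_def)

lemma bstep_leads1:
  assumes ab: "a \<subseteq> b" "b \<subseteq> {1..n}" and ks: "ks \<in> Sigma_seq (b - a)" and st: "bstep ks ks'"
  shows "leads1 n a b (mk a ks) (mk a ks')"
proof -
  obtain p q i j where h: "i < j" "ks = p @ [j, i] @ q" "ks' = p @ [i, j] @ q" using st bstep_iff by blast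
  have dk: "distinct ks" "set ks = b - a" using ks by (auto simp: Sigma_seq_def)
  define v where "v = a \<union> set p"
  have v: "v \<subseteq> {1..n}" "i \<notin> v" "j \<notin> v" "i \<in> {1..n}" "j \<in> {1..n}"
    using dk ab h by (auto simp: v_def)
  define c where "c = sq v i j"
  have cc: "cmor 2 n c" unfolding c_def sq_def using v h(1) by (intro sq_build) auto
  have p1: "is_path n a v (mk a p)"
  proof -
    have "(\<forall>e\<in>set (mk a p). cmor 1 n e) \<and> chain src tgt a (a \<union> set p) (mk a p) \<and> dseq (mk a p) = p"
      using dk ab h by (intro mk_props) auto
    then show ?thesis using ab by (auto simp: is_path_def v_def)
  qed
  have p2: "is_path n (insert i (insert j v)) b (mk (insert i (insert j v)) q)"
  proof -
    have "(\<forall>e\<in>set (mk (insert i (insert j v)) q). cmor 1 n e) \<and>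
      chain src tgt (insert i (insert j v)) (insert i (insert j v) \<union> set q) (mk (insert i (insert j v)) q) \<and>
      dseq (mk (insert i (insert j v)) q) = q"
      using dk ab h v by (intro mk_props) (auto simp: v_def)
    moreover have "insert i (insert j v) \<union> set q = b" using dk ab h by (auto simp: v_def)
    ultimately show ?thesis using v by (auto simp: is_path_def)
  qed
  have f0: "cmor 1 (Suc 1) (face 1 k e)" if "k \<in> {1,2}" for k e using that by (intro cmor_face) auto
  have f1: "cmor 1 2 (face 1 k e)" if "k \<in> {1,2}" for k e using f0[OF that] by (simp only: Suc_1)
  have cm: "cmor 1 n (cmp 1 c (face 1 k e))" if "k \<in> {1,2}" for k e
    using cmor_comp[OF f1[OF that] cc] .
  have e1: "cmp 1 c (face 1 1 False) = edge v j"
    by (rule cell_eq[OF cm edge_cmor[OF v(1) v(5) v(3)]]) (auto simp: cmp1_src cmp1_tgt face_vals c_def sq_vals cmp1_src[unfolded One_nat_def] cmp1_tgt[unfolded One_nat_def] face_vals[unfolded One_nat_def] sq_vals[unfolded One_nat_def])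
  have e2: "cmp 1 c (face 1 2 True) = edge (insert j v) i"
    by (rule cell_eq[OF cm edge_cmor]) (use v h(1) in \<open>auto simp: cmp1_src cmp1_tgt face_vals c_def sq_vals cmp1_src[unfolded One_nat_def] cmp1_tgt[unfolded One_nat_def] face_vals[unfolded One_nat_def] sq_vals[unfolded One_nat_def]\<close>)
  have e3: "cmp 1 c (face 1 2 False) = edge v i"
    by (rule cell_eq[OF cm edge_cmor[OF v(1) v(4) v(2)]]) (auto simp: cmp1_src cmp1_tgt face_vals c_def sq_vals cmp1_src[unfolded One_nat_def] cmp1_tgt[unfolded One_nat_def] face_vals[unfolded One_nat_def] sq_vals[unfolded One_nat_def])
  have e4: "cmp 1 c (face 1 1 True) = edge (insert i v) j"
    by (rule cell_eq[OF cm edge_cmor]) (use v h(1) in \<open>auto simp: cmp1_src cmp1_tgt face_vals c_def sq_vals cmp1_src[unfolded One_nat_def] cmp1_tgt[unfolded One_nat_def] face_vals[unfolded One_nat_def] sq_vals[unfolded One_nat_def]\<close>)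
  have mx: "mk a ks = mk a p @ [cmp 1 c (face 1 1 False), cmp 1 c (face 1 2 True)] @ mk (insert i (insert j v)) q"
  proof -
    have ii: "insert j (insert i (a \<union> set p)) = insert i (insert j (a \<union> set p))" by blast
    show ?thesis unfolding e1 e2 h(2) mk_append by (simp add: v_def ii)
  qed
  have my: "mk a ks' = mk a p @ [cmp 1 c (face 1 2 False), cmp 1 c (face 1 1 True)] @ mk (insert i (insert j v)) q"
  proof -
    have ii: "insert j (insert i (a \<union> set p)) = insert i (insert j (a \<union> set p))" by blast
    show ?thesis unfolding e3 e4 h(3) mk_append by (simp add: v_def ii)
  qed
  show ?thesis unfolding leads1_def
    apply (rule exI[of _ "mk a p"], rule exI[of _ c], rule exI[of _ "mk (insert i (insert j v)) q"])
    using p1 p2 cc mx my by (simp add: c_def sq_vals sq_vals[unfolded One_nat_def] pathEq_def)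
qed

lemma bruhat_RR:
  assumes ab: "a \<subseteq> b" "b \<subseteq> {1..n}"
  shows "bruhat ks ks' \<Longrightarrow> ks \<in> Sigma_seq (b - a) \<Longrightarrow> (RR n a b)\<^sup>*\<^sup>* (mk a ks) (mk a ks')"
  unfolding bruhat_def
proof (induction rule: rtranclp_induct)
  case base then show ?case by simp
next
  case (step y z)
  have "y \<in> Sigma_seq (b - a)" using bruhat_Sigma[of ks y] step unfolding bruhat_def by blast
  then have "leads1 n a b (mk a y) (mk a z)" using bstep_leads1[OF ab] step(2) by blast
  then have st: "RR n a b (mk a y) (mk a z)" by simp
  have "(RR n a b)\<^sup>*\<^sup>* (mk a ks) (mk a y)" using step by blast
  from this st show ?case by (rule rtranclp.rtrancl_into_rtrancl)
qed



lemma Cpath_iff: "X \<in> Cpath n a b \<longleftrightarrow> (\<exists>x. is_path n a b x \<and> X = pcls n a b x)"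
  unfolding Cpath_def quotient_def pcls_def by auto

lemma pcls_self: "x \<in> pcls n a b x"
  by (simp add: pcls_def pathEq_def)

lemma pcls_mem_dseq: "z \<in> pcls n a b x \<Longrightarrow> dseq z = dseq x"
  unfolding pcls_def using pathEq_dseq by fastforce

lemma Phi_pcls: "dseq (SOME z. z \<in> pcls n a b x) = dseq x"
  using someI[of "\<lambda>z. z \<in> pcls n a b x", OF pcls_self] pcls_mem_dseq by blast

lemma pcls_eq: "pathEq n a b x y \<Longrightarrow> pcls n a b x = pcls n a b y"
  unfolding pcls_def pathEq_def by (auto intro: equivclp_trans equivclp_sym)

theorem proposition2p14:
  fixes n :: nat
  shows "\<exists>\<Phi> :: nat set \<Rightarrow> nat set \<Rightarrow> (nat set \<Rightarrow> nat set) list set \<Rightarrow> nat list.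
     (\<forall>a b. a \<subseteq> b \<and> b \<subseteq> {1..n} \<longrightarrow>
        bij_betw (\<Phi> a b) (Cpath n a b) (Sigma_seq (b - a)) \<and>
        (\<forall>X\<in>Cpath n a b. \<forall>Y\<in>Cpath n a b. leads n a b X Y \<longleftrightarrow> bruhat (\<Phi> a b X) (\<Phi> a b Y))) \<and>
     (\<forall>a b c x y. a \<subseteq> b \<and> b \<subseteq> c \<and> c \<subseteq> {1..n} \<and> is_path n a b x \<and> is_path n b c y \<longrightarrow>
        \<Phi> a c (pcls n a c (x @ y)) = \<Phi> a b (pcls n a b x) @ \<Phi> b c (pcls n b c y)) \<and>
     (\<forall>a b. a \<subseteq> b \<and> b \<subseteq> {1..n} \<longrightarrow>
        (\<forall>X\<in>Cpath n a b. \<forall>Y\<in>Cpath n a b. leads n a b X Y \<and> leads n a b Y X \<longrightarrow> X = Y))"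
proof -
  define \<Phi> :: "nat set \<Rightarrow> nat set \<Rightarrow> (nat set \<Rightarrow> nat set) list set \<Rightarrow> nat list" where
    "\<Phi> = (\<lambda>a b X. dseq (SOME z. z \<in> X))"
  have Ph: "\<Phi> a b (pcls n a b x) = dseq x" for a b x by (simp add: \<Phi>_def Phi_pcls)
  have inj: "X = Y" if ab: "a \<subseteq> b" "b \<subseteq> {1..n}" and X: "X \<in> Cpath n a b" and Y: "Y \<in> Cpath n a b"
    and eq: "\<Phi> a b X = \<Phi> a b Y" for a b X Y
  proof -
    obtain x where x: "is_path n a b x" "X = pcls n a b x" using X Cpath_iff by blast
    obtain y where y: "is_path n a b y" "Y = pcls n a b y" using Y Cpath_iff by blast
    have "dseq x = dseq y" using eq x y Ph by simp
    then have "pathEq n a b x y" using same_dseq_pathEq x(1) y(1) by blast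
    then show ?thesis using x y pcls_eq by simp
  qed
  have leads_iff: "leads n a b X Y \<longleftrightarrow> bruhat (\<Phi> a b X) (\<Phi> a b Y)"
    if ab: "a \<subseteq> b" "b \<subseteq> {1..n}" and X: "X \<in> Cpath n a b" and Y: "Y \<in> Cpath n a b" for a b X Y
  proof -
    obtain x where x: "is_path n a b x" "X = pcls n a b x" using X Cpath_iff by blast
    obtain y where y: "is_path n a b y" "Y = pcls n a b y" using Y Cpath_iff by blast
    show ?thesis
    proof
      assume "leads n a b X Y"
      then obtain x' y' where "x' \<in> X" "y' \<in> Y" "(RR n a b)\<^sup>*\<^sup>* x' y'" unfolding leads_def by blast
      then have "bruhat (dseq x') (dseq y')" "dseq x' = dseq x" "dseq y' = dseq y"
        using RR_bruhat x y pcls_mem_dseq by blast+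
      then show "bruhat (\<Phi> a b X) (\<Phi> a b Y)" using x y Ph by simp
    next
      assume "bruhat (\<Phi> a b X) (\<Phi> a b Y)"
      then have br: "bruhat (dseq x) (dseq y)" using x y Ph by simp
      have xs: "dseq x \<in> Sigma_seq (b - a)"
        using dseq_Sigma[of x n a b] x(1) by (auto simp: is_path_def Sigma_seq_def)
      have R: "(RR n a b)\<^sup>*\<^sup>* (mk a (dseq x)) (mk a (dseq y))" using bruhat_RR[OF ab br xs] .
      have ys: "dseq y \<in> Sigma_seq (b - a)" using bruhat_Sigma[OF br xs] .
      have mx: "is_path n a b (mk a (dseq x)) \<and> dseq (mk a (dseq x)) = dseq x" using mk_path[OF ab xs] .
      have my: "is_path n a b (mk a (dseq y)) \<and> dseq (mk a (dseq y)) = dseq y" using mk_path[OF ab ys] .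
      have "mk a (dseq x) \<in> X" using same_dseq_pathEq[of n a b x] x mx by (simp add: pcls_def)
      moreover have "mk a (dseq y) \<in> Y" using same_dseq_pathEq[of n a b y] y my by (simp add: pcls_def)
      ultimately show "leads n a b X Y" unfolding leads_def using R by blast
    qed
  qed
  have bij: "bij_betw (\<Phi> a b) (Cpath n a b) (Sigma_seq (b - a))" if ab: "a \<subseteq> b" "b \<subseteq> {1..n}" for a b
  proof (rule bij_betw_imageI)
    show "inj_on (\<Phi> a b) (Cpath n a b)" using inj[OF ab] by (auto intro: inj_onI)
    show "\<Phi> a b ` Cpath n a b = Sigma_seq (b - a)"
    proof
      show "\<Phi> a b ` Cpath n a b \<subseteq> Sigma_seq (b - a)"
      proof
        fix ks assume "ks \<in> \<Phi> a b ` Cpath n a b"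
        then obtain x where x: "is_path n a b x" "ks = dseq x" using Cpath_iff Ph by auto
        then show "ks \<in> Sigma_seq (b - a)"
          using dseq_Sigma[of x n a b] by (auto simp: is_path_def Sigma_seq_def)
      qed
      show "Sigma_seq (b - a) \<subseteq> \<Phi> a b ` Cpath n a b"
      proof
        fix ks assume ks: "ks \<in> Sigma_seq (b - a)"
        have m: "is_path n a b (mk a ks) \<and> dseq (mk a ks) = ks" using mk_path[OF ab ks] .
        then have "pcls n a b (mk a ks) \<in> Cpath n a b" using Cpath_iff by blast
        moreover have "\<Phi> a b (pcls n a b (mk a ks)) = ks" using m Ph by simp
        ultimately show "ks \<in> \<Phi> a b ` Cpath n a b" by (metis image_eqI)
      qed
    qed
  qed
  show ?thesis
  proof (rule exI[of _ \<Phi>], intro conjI allI impI ballI)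
    fix a b assume "a \<subseteq> b \<and> b \<subseteq> {1..n}"
    then show "bij_betw (\<Phi> a b) (Cpath n a b) (Sigma_seq (b - a))" using bij by blast
  next
    fix a b X Y assume "a \<subseteq> b \<and> b \<subseteq> {1..n}" "X \<in> Cpath n a b" "Y \<in> Cpath n a b"
    then show "leads n a b X Y \<longleftrightarrow> bruhat (\<Phi> a b X) (\<Phi> a b Y)" using leads_iff by blast
  next
    fix a b c x y
    show "\<Phi> a c (pcls n a c (x @ y)) = \<Phi> a b (pcls n a b x) @ \<Phi> b c (pcls n b c y)" using Ph by simp
  next
    fix a b X Y assume ab: "a \<subseteq> b \<and> b \<subseteq> {1..n}" and XY: "X \<in> Cpath n a b" "Y \<in> Cpath n a b"
      and l: "leads n a b X Y \<and> leads n a b Y X"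
    then have "bruhat (\<Phi> a b X) (\<Phi> a b Y)" "bruhat (\<Phi> a b Y) (\<Phi> a b X)" using leads_iff by blast+
    then have "\<Phi> a b X = \<Phi> a b Y" by (rule bruhat_antisym)
    then show "X = Y" using inj ab XY by blast
  qed
qed

end
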